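(* Let $n\in\mathbb N$, let $p$ be a prime number, let $m$ be a positive integer, and let $x\in\mathbb Z_n\times\mathbb Z_n$ have order $\operatorname{ord}(x)=p^m$ in the group $\mathbb Z_n\times\mathbb Z_n$. Let $A\subseteq\mathbb Z_n\times\mathbb Z_n$. If $\widehat{\mathbf 1}_A^{sym}(x)=0$, then $$|A\cap\langle px\rangle^{\perp_s}|=p\cdot|A\cap\langle x\rangle^{\perp_s}|.$$
   Context: $\mathbb Z_n$ is the additive cyclic group of order $n$. For $x=(x_1,x_2),y=(y_1,y_2)\in\mathbb Z_n\times\mathbb Z_n$ the symplectic form is $\langle x,y\rangle_s=x_1y_2-x_2y_1\in\mathbb Z_n$. For $A\subseteq\mathbb Z_n\times\mathbb Z_n$ the discrete symplectic Fourier transform of its indicator is $\widehat{\mathbf 1}_A^{sym}(\xi)=\sum_{a\in A}e^{\frac{2\pi i}{n}\langle a,\xi\rangle_s}$. For $x\in\mathbb Z_n\times\mathbb Z_n$, $\langle x\rangle$ denotes the cyclic subgroup generated by $x$. For $H\subseteq\mathbb Z_n\times\mathbb Z_n$, the symplectic orthogonal set is $H^{\perp_s}=\{g\in\mathbb Z_n\times\mathbb Z_n:\langle g,h\rangle_s=0\ \forall h\in H\}$. *)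

theory Defs
  imports Complex_Main "HOL-Computational_Algebra.Primes"
begin

definition zn2 :: "nat \<Rightarrow> (int \<times> int) set" where
  "zn2 n = {0..<int n} \<times> {0..<int n}"

definition zn2_smult :: "nat \<Rightarrow> int \<Rightarrow> int \<times> int \<Rightarrow> int \<times> int" where
  "zn2_smult n k x = ((k * fst x) mod int n, (k * snd x) mod int n)"

definition zn2_ord :: "nat \<Rightarrow> int \<times> int \<Rightarrow> nat" where
  "zn2_ord n x = (LEAST k::nat. 0 < k \<and> zn2_smult n (int k) x = (0, 0))"

definition symp :: "nat \<Rightarrow> int \<times> int \<Rightarrow> int \<times> int \<Rightarrow> int" where
  "symp n x y = (fst x * snd y - snd x * fst y) mod int n"

definition cyc :: "nat \<Rightarrow> int \<times> int \<Rightarrow> (int \<times> int) set" where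
  "cyc n x = {zn2_smult n k x | k. True}"

definition sperp :: "nat \<Rightarrow> (int \<times> int) set \<Rightarrow> (int \<times> int) set" where
  "sperp n H = {g \<in> zn2 n. \<forall>h\<in>H. symp n g h = 0}"

definition sym_fourier :: "nat \<Rightarrow> (int \<times> int) set \<Rightarrow> int \<times> int \<Rightarrow> complex" where
  "sym_fourier n A \<xi> = (\<Sum>a\<in>A. exp (2 * pi * \<i> * of_int (symp n a \<xi>) / of_nat n))"

end

theory Submission
  imports Defs "HOL-Computational_Algebra.Computational_Algebra"
begin


definition pcong :: "int \<Rightarrow> int poly \<Rightarrow> int poly \<Rightarrow> bool" where
  "pcong P f g \<longleftrightarrow> [:P:] dvd (f - g)"

lemma pcong_refl: "pcong P f f" by (simp add: pcong_def)
lemma pcong_sym: "pcong P f g \<Longrightarrow> pcong P g f"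
  unfolding pcong_def by (metis dvd_minus_iff minus_diff_eq)
lemma pcong_trans: "pcong P f g \<Longrightarrow> pcong P g h \<Longrightarrow> pcong P f h"
proof -
  assume "pcong P f g" "pcong P g h"
  then have "[:P:] dvd (f - g) + (g - h)" unfolding pcong_def by (rule dvd_add)
  then show ?thesis unfolding pcong_def by simp
qed
lemma pcong_add: "pcong P f g \<Longrightarrow> pcong P f' g' \<Longrightarrow> pcong P (f + f') (g + g')"
proof -
  assume "pcong P f g" "pcong P f' g'"
  then have "[:P:] dvd (f - g) + (f' - g')" unfolding pcong_def by simp
  then show ?thesis unfolding pcong_def by (simp add: algebra_simps)
qed
lemma pcong_diff: "pcong P f g \<Longrightarrow> pcong P f' g' \<Longrightarrow> pcong P (f - f') (g - g')"
proof -
  assume "pcong P f g" "pcong P f' g'"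
  then have "[:P:] dvd (f - g) - (f' - g')" unfolding pcong_def by (rule dvd_diff)
  then show ?thesis unfolding pcong_def by (simp add: algebra_simps)
qed
lemma pcong_mult: "pcong P f g \<Longrightarrow> pcong P f' g' \<Longrightarrow> pcong P (f * f') (g * g')"
proof -
  assume "pcong P f g" "pcong P f' g'"
  then have "[:P:] dvd (f - g) * f' + g * (f' - g')" unfolding pcong_def by simp
  moreover have "(f - g) * f' + g * (f' - g') = f * f' - g * g'" by (simp add: algebra_simps)
  ultimately show ?thesis unfolding pcong_def by simp
qed
lemma pcong_power: "pcong P f g \<Longrightarrow> pcong P (f ^ n) (g ^ n)"
  by (induction n) (auto simp: pcong_refl pcong_mult)
lemma pcong_sum: "(\<And>i. i \<in> A \<Longrightarrow> pcong P (f i) (g i)) \<Longrightarrow> pcong P (sum f A) (sum g A)"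
  unfolding pcong_def by (simp add: sum_subtractf[symmetric] dvd_sum)

lemma frob1:
  fixes Y :: "int poly" assumes p: "prime p"
  shows "pcong (int p) ((Y + 1) ^ p) (Y ^ p + 1)"
proof -
  have p0: "p \<noteq> 0" using p by auto
  define t where "t k = (of_nat (p choose k) :: int poly) * Y ^ k" for k
  have e: "(Y + 1) ^ p = (\<Sum>k\<le>p. t k)"
    by (simp add: binomial_ring t_def)
  have e2: "Y ^ p + 1 = (\<Sum>k\<le>p. (if k = p then Y ^ p else 0) + (if k = 0 then 1 else 0))"
    by (simp add: sum.distrib)
  have "pcong (int p) (t k) ((if k = p then Y ^ p else 0) + (if k = 0 then 1 else 0))"
    if "k \<le> p" for k
  proof (cases "k = 0 \<or> k = p")
    case True then show ?thesis using p0 by (auto simp: t_def pcong_refl)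
  next
    case False
    then have "p dvd (p choose k)" using dvd_choose_prime[of k p] p that by auto
    then obtain c where c: "p choose k = p * c" by auto
    have "t k = [:int p:] * ([:int c:] * Y ^ k)"
      by (simp add: t_def c of_nat_poly mult.commute del: mult_pCons_left)
    then show ?thesis using False unfolding pcong_def by (simp del: mult_pCons_left)
  qed
  then show ?thesis unfolding e e2 by (intro pcong_sum) auto
qed

lemma frob:
  fixes Y :: "int poly" assumes p: "prime p"
  shows "pcong (int p) ((Y + 1) ^ (p ^ k)) (Y ^ (p ^ k) + 1)"
proof (induction k)
  case 0 then show ?case by (simp add: pcong_refl)
next
  case (Suc k)
  have "(Y + 1) ^ (p ^ Suc k) = ((Y + 1) ^ (p ^ k)) ^ p"
    by (metis power_Suc power_mult mult.commute)
  moreover have "pcong (int p) (((Y + 1) ^ (p ^ k)) ^ p) ((Y ^ (p ^ k) + 1) ^ p)"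
    using Suc pcong_power by blast
  moreover have "pcong (int p) ((Y ^ (p ^ k) + 1) ^ p) ((Y ^ (p ^ k)) ^ p + 1)"
    using frob1[OF p] by blast
  moreover have "(Y ^ (p ^ k)) ^ p = Y ^ (p ^ Suc k)"
    by (simp add: power_mult[symmetric] mult.commute)
  ultimately show ?case using pcong_trans by metis
qed



definition Phi :: "nat \<Rightarrow> nat \<Rightarrow> int poly" where
  "Phi p M = (\<Sum>v<p. monom 1 (v * M))"

lemma coeff_Phi:
  assumes "M > 0"
  shows "coeff (Phi p M) i = (if M dvd i \<and> i div M < p then 1 else 0)"
proof -
  have "coeff (Phi p M) i = (\<Sum>v<p. if v * M = i then 1 else 0)"
    by (simp add: Phi_def coeff_sum coeff_monom)
  also have "\<dots> = (\<Sum>v<p. if v = i div M \<and> M dvd i then 1 else 0)"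
    using assms by (intro sum.cong) auto
  also have "\<dots> = (if M dvd i \<and> i div M < p then 1 else 0)"
    by (cases "M dvd i") (simp_all add: sum.delta)
  finally show ?thesis .
qed

lemma degree_Phi:
  assumes "M > 0" "p > 0"
  shows "degree (Phi p M) = (p - 1) * M" and "lead_coeff (Phi p M) = 1"
proof -
  have c: "coeff (Phi p M) ((p - 1) * M) = 1"
    using assms by (simp add: coeff_Phi)
  have "degree (Phi p M) \<le> (p - 1) * M"
  proof (rule degree_le, intro allI impI)
    fix i assume i: "(p - 1) * M < i"
    show "coeff (Phi p M) i = 0"
    proof (cases "M dvd i \<and> i div M < p")
      case True
      then obtain v where "i = v * M" "v < p" using assms by (auto elim!: dvdE)
      then have "i \<le> (p - 1) * M" using assms by (simp add: mult_le_mono1)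
      then show ?thesis using i by simp
    next
      case False then show ?thesis using assms by (simp add: coeff_Phi)
    qed
  qed
  moreover have "(p - 1) * M \<le> degree (Phi p M)" using c by (intro le_degree) simp
  ultimately show d: "degree (Phi p M) = (p - 1) * M" by simp
  show "lead_coeff (Phi p M) = 1" using c d by simp
qed

lemma pcompose_monom1: "pcompose (monom (1::int) d) q = q ^ d"
  by (simp add: poly_eq_poly_eq_iff[symmetric] poly_pcompose poly_monom fun_eq_iff)

lemma Phi_shift_cong:
  assumes p: "prime p" and M: "M = p ^ k"
  shows "pcong (int p) (pcompose (Phi p M) [:1,1:]) (monom 1 ((p - 1) * M))"
proof -
  define X :: "int poly" where "X = monom 1 1"
  define Y where "Y = X ^ M"
  have X1: "[:1,1:] = X + 1"
    by (rule poly_eqI) (simp add: X_def coeff_monom coeff_pCons split: nat.split)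
  have "pcompose (Phi p M) [:1,1:] = (\<Sum>v<p. ((X + 1) ^ M) ^ v)"
    unfolding Phi_def pcompose_sum pcompose_monom1 X1
    by (intro sum.cong refl) (metis power_mult mult.commute)
  moreover have c1: "pcong (int p) (\<Sum>v<p. ((X + 1) ^ M) ^ v) (\<Sum>v<p. (Y + 1) ^ v)"
    using frob[OF p, of X k] unfolding Y_def M[symmetric]
    by (intro pcong_sum pcong_power) auto
  moreover have c2: "pcong (int p) (\<Sum>v<p. (Y + 1) ^ v) (Y ^ (p - 1))"
  proof -
    have "Y * (\<Sum>v<p. (Y + 1) ^ v) = (Y + 1) ^ p - 1"
      using power_diff_1_eq[of "Y + 1" p] by simp
    moreover have "pcong (int p) ((Y + 1) ^ p - 1) (Y ^ p + 1 - 1)"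
      using frob1[OF p, of Y] by (intro pcong_diff pcong_refl) auto
    ultimately have "[:int p:] dvd Y * (\<Sum>v<p. (Y + 1) ^ v) - Y ^ p"
      unfolding pcong_def by simp
    moreover have "Y ^ p = Y * Y ^ (p - 1)" using p
      by (simp add: power_eq_if)
    ultimately have dv: "[:int p:] dvd Y * ((\<Sum>v<p. (Y + 1) ^ v) - Y ^ (p - 1))"
      by (simp add: right_diff_distrib)
    have pe: "prime_elem [:int p:]"
      using p by (simp add: prime_elem_const_poly_iff)
    have nd: "\<not> [:int p:] dvd Y"
    proof
      assume "[:int p:] dvd Y"
      then have "int p dvd coeff Y M" by (simp add: const_poly_dvd_iff)
      moreover have "coeff Y M = 1" unfolding Y_def X_def by (simp add: monom_power)
      ultimately show False using p by (simp add: prime_gt_1_nat)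
    qed
    from prime_elem_dvd_multD[OF pe dv] nd show ?thesis unfolding pcong_def by simp
  qed
  moreover have "Y ^ (p - 1) = monom 1 ((p - 1) * M)"
    unfolding Y_def X_def by (simp add: monom_power mult.commute)
  ultimately show ?thesis using pcong_trans[OF c1 c2] by simp
qed



lemma eisen_aux:
  fixes A B :: "int poly" and P :: int
  assumes P: "prime P" and AB: "A * B = F" and c0: "coeff F 0 = P"
    and cs: "\<forall>i<degree F. P dvd coeff F i" and lc: "lead_coeff F = 1"
    and a0: "P dvd coeff A 0"
  shows "degree B = 0"
proof -
  have F0: "F \<noteq> 0" using lc by auto
  then have A0: "A \<noteq> 0" and B0: "B \<noteq> 0" using AB by auto
  have "lead_coeff A * lead_coeff B = 1" using lc unfolding AB[symmetric] by (simp add: lead_coeff_mult)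
  then have nlc: "\<not> P dvd lead_coeff A"
    using P by (metis dvd_mult2 not_prime_unit)
  define k where "k = (LEAST k. \<not> P dvd coeff A k)"
  have k1: "\<not> P dvd coeff A k" unfolding k_def by (rule LeastI[of _ "degree A"]) (rule nlc)
  have k2: "k \<le> degree A" unfolding k_def by (rule Least_le) (rule nlc)
  have k3: "P dvd coeff A i" if "i < k" for i using not_less_Least[OF that[unfolded k_def]] by simp
  have nb0: "\<not> P dvd coeff B 0"
  proof
    assume "P dvd coeff B 0"
    then have "P * P dvd coeff A 0 * coeff B 0" using a0 by (intro mult_dvd_mono)
    also have "coeff A 0 * coeff B 0 = P" using AB c0 by (simp flip: AB add: coeff_mult)
    finally have "P * P dvd P * 1" by simp
    then have "P dvd 1" using P by (subst (asm) dvd_mult_cancel_left) auto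
    then show False using P by (simp add: not_prime_unit)
  qed
  have "coeff F k = (\<Sum>i\<le>k. coeff A i * coeff B (k - i))" using AB by (simp flip: AB add: coeff_mult)
  also have "\<dots> = (\<Sum>i<k. coeff A i * coeff B (k - i)) + coeff A k * coeff B 0"
    by (simp add: lessThan_Suc_atMost[symmetric])
  finally have eq: "coeff F k = (\<Sum>i<k. coeff A i * coeff B (k - i)) + coeff A k * coeff B 0" .
  have "P dvd (\<Sum>i<k. coeff A i * coeff B (k - i))" by (intro dvd_sum) (simp add: k3)
  moreover have "\<not> P dvd coeff A k * coeff B 0"
    using P k1 nb0 by (simp add: prime_dvd_mult_iff)
  ultimately have "\<not> P dvd coeff F k" unfolding eq using dvd_add_right_iff by blast
  then have "\<not> k < degree F" using cs by blast
  moreover have "degree F = degree A + degree B" using AB A0 B0 by (simp flip: AB add: degree_mult_eq)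
  ultimately show ?thesis using k2 by simp
qed

lemma eisenstein:
  fixes A B :: "int poly" and P :: int
  assumes P: "prime P" and AB: "A * B = F" and c0: "coeff F 0 = P"
    and cs: "\<forall>i<degree F. P dvd coeff F i" and lc: "lead_coeff F = 1"
  shows "degree A = 0 \<or> degree B = 0"
proof -
  have "coeff A 0 * coeff B 0 = P" using AB c0 by (simp flip: AB add: coeff_mult)
  then have "P dvd coeff A 0 \<or> P dvd coeff B 0" using P by (metis dvd_refl prime_dvd_mult_iff)
  then show ?thesis
  proof
    assume "P dvd coeff A 0"
    then have "degree B = 0" by (rule eisen_aux[OF P AB c0 cs lc])
    then show ?thesis by simp
  next
    assume h: "P dvd coeff B 0"
    have "B * A = F" using AB by (simp add: mult.commute)
    then have "degree A = 0" using h by (rule eisen_aux[OF P _ c0 cs lc])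
    then show ?thesis by simp
  qed
qed

lemma Phi_irreducible:
  assumes p: "prime p" and M: "M = p ^ k"
  shows "irreducible (Phi p M)"
proof -
  have M0: "M > 0" and p0: "p > 0" using p M by (auto simp: prime_gt_0_nat)
  have p1: "p > 1" using prime_gt_1_nat[OF p] by simp
  note dP = degree_Phi[OF M0 p0]
  have degpos: "degree (Phi p M) > 0" using dP p1 M0 by simp
  define F where "F = pcompose (Phi p M) [:1,1:]"
  have dF: "degree F = (p - 1) * M" unfolding F_def by (simp add: degree_pcompose dP)
  have lF: "lead_coeff F = 1" unfolding F_def using p1 by (simp add: lead_coeff_comp dP coeff_Phi[OF M0])
  have cF0: "coeff F 0 = int p"
  proof -
    have "coeff F 0 = poly F 0" by (simp add: poly_0_coeff_0)
    also have "\<dots> = poly (Phi p M) 1" by (simp add: F_def poly_pcompose)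
    also have "\<dots> = int p" by (simp add: Phi_def poly_sum poly_monom)
    finally show ?thesis .
  qed
  have cs: "int p dvd coeff F i" if "i < degree F" for i
  proof -
    have "int p dvd coeff (F - monom 1 ((p - 1) * M)) i"
      using Phi_shift_cong[OF p M] unfolding pcong_def F_def const_poly_dvd_iff by blast
    then show ?thesis using that dF by (simp add: coeff_monom)
  qed
  have Pp: "prime (int p)" using p by simp
  show ?thesis
  proof (rule irreducibleI)
    show "Phi p M \<noteq> 0" using degpos by auto
    show "\<not> is_unit (Phi p M)" using degpos by (auto simp: is_unit_poly_iff)
  next
    fix a b assume ab: "Phi p M = a * b"
    have "pcompose a [:1,1:] * pcompose b [:1,1:] = F" by (simp add: F_def ab pcompose_mult)
    from eisenstein[OF Pp this cF0 _ lF] cs have dab: "degree a = 0 \<or> degree b = 0"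
      by (simp add: degree_pcompose)
    have lab: "lead_coeff a * lead_coeff b = 1" by (metis dP(2) ab lead_coeff_mult)
    from dab show "is_unit a \<or> is_unit b"
    proof
      assume "degree a = 0"
      then obtain c where c: "a = [:c:]" by (elim degree_eq_zeroE)
      have "c * lead_coeff b = 1" using lab by (simp add: c)
      then have "c dvd 1" by (metis dvd_triv_left)
      then show ?thesis by (simp add: c is_unit_const_poly_iff)
    next
      assume "degree b = 0"
      then obtain c where c: "b = [:c:]" by (elim degree_eq_zeroE)
      have "lead_coeff a * c = 1" using lab by (simp add: c)
      then have "c dvd 1" by (metis dvd_triv_right)
      then show ?thesis by (simp add: c is_unit_const_poly_iff)
    qed
  qed
qed



definition ev :: "complex \<Rightarrow> int poly \<Rightarrow> complex" where
  "ev z f = poly (map_poly of_int f) z"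

lemma map_poly_of_int_mult: "map_poly (of_int :: int \<Rightarrow> complex) (f * g) = map_poly of_int f * map_poly of_int g"
  by (rule poly_eqI) (simp add: coeff_map_poly coeff_mult of_int_sum)
lemma map_poly_of_int_add: "map_poly (of_int :: int \<Rightarrow> complex) (f + g) = map_poly of_int f + map_poly of_int g"
  by (rule poly_eqI) (simp add: coeff_map_poly)
lemma map_poly_of_int_diff: "map_poly (of_int :: int \<Rightarrow> complex) (f - g) = map_poly of_int f - map_poly of_int g"
  by (rule poly_eqI) (simp add: coeff_map_poly)

lemma ev_mult: "ev z (f * g) = ev z f * ev z g"
  by (simp add: ev_def map_poly_of_int_mult)
lemma ev_add: "ev z (f + g) = ev z f + ev z g"
  by (simp add: ev_def map_poly_of_int_add)
lemma ev_diff: "ev z (f - g) = ev z f - ev z g"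
  by (simp add: ev_def map_poly_of_int_diff)
lemma ev_smult: "ev z (smult c f) = of_int c * ev z f"
  by (simp add: ev_def map_poly_smult)
lemma ev_const: "ev z [:c:] = of_int c"
  by (simp add: ev_def map_poly_pCons)

lemma Phi_dvd:
  assumes p: "prime p" and M: "M = p ^ k" and root: "ev z (Phi p M) = 0" and f: "ev z f = 0"
  shows "Phi p M dvd f"
proof -
  define \<Phi> where "\<Phi> = Phi p M"
  have irr: "irreducible \<Phi>" unfolding \<Phi>_def by (rule Phi_irreducible[OF p M])
  then have pr: "prime_elem \<Phi>" by (rule irreducible_imp_prime_poly)
  have \<Phi>0: "\<Phi> \<noteq> 0" using irr by auto
  have M0: "M > 0" and p0: "p > 0" using p M by (auto simp: prime_gt_0_nat)
  have lc: "lead_coeff \<Phi> = 1" unfolding \<Phi>_def by (rule degree_Phi(2)[OF M0 p0])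
  have "\<exists>g. (g \<noteq> 0 \<and> ev z g = 0) \<and> (\<forall>h. (h \<noteq> 0 \<and> ev z h = 0) \<longrightarrow> degree g \<le> degree h)"
    using \<Phi>0 root unfolding \<Phi>_def[symmetric] by (intro ex_has_least_nat[where m = degree]) auto
  then obtain g where g0: "g \<noteq> 0" and gz: "ev z g = 0"
    and gmin: "\<And>h. h \<noteq> 0 \<Longrightarrow> ev z h = 0 \<Longrightarrow> degree g \<le> degree h" by blast
  have dg: "degree \<Phi> \<le> degree g"
  proof -
    obtain q r where qr: "pseudo_divmod \<Phi> g = (q, r)" by force
    define c where "c = lead_coeff g ^ (Suc (degree \<Phi>) - degree g)"
    have e: "smult c \<Phi> = g * q + r" using pseudo_divmod(1)[OF g0 qr] by (simp add: c_def)
    have c0: "c \<noteq> 0" using g0 by (simp add: c_def)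
    have "ev z r = 0"
    proof -
      have "ev z (smult c \<Phi>) = ev z (g * q) + ev z r" by (simp add: e ev_add)
      then show ?thesis using root gz by (simp add: ev_smult ev_mult \<Phi>_def)
    qed
    then have r0: "r = 0" using pseudo_divmod(2)[OF g0 qr] gmin by force
    have "\<Phi> dvd g * q" using e r0 by (metis add.right_neutral dvd_smult dvd_refl)
    then have "\<Phi> dvd g \<or> \<Phi> dvd q" using pr by (simp add: prime_elem_dvd_mult_iff)
    then show ?thesis
    proof
      assume "\<Phi> dvd g" then show ?thesis using g0 by (rule dvd_imp_degree_le)
    next
      assume "\<Phi> dvd q"
      then obtain s where s: "q = \<Phi> * s" by (elim dvdE)
      have "[:c:] * \<Phi> = (g * s) * \<Phi>" using e r0 s by (simp add: mult_ac)
      then have gs: "[:c:] = g * s" using mult_right_cancel[OF \<Phi>0] by blast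
      then have "s \<noteq> 0" using c0 by auto
      then have "degree g = 0" using gs g0 by (metis add_eq_0_iff_both_eq_0 degree_mult_eq degree_pCons_0)
      then obtain a where a: "g = [:a:]" by (elim degree_eq_zeroE)
      then have "a = 0" using gz by (simp add: ev_const)
      then show ?thesis using a g0 by simp
    qed
  qed
  obtain q r where qr: "pseudo_divmod f \<Phi> = (q, r)" by force
  have e: "f = \<Phi> * q + r" using pseudo_divmod(1)[OF \<Phi>0 qr] lc by simp
  have "ev z r = 0"
  proof -
    have "ev z f = ev z (\<Phi> * q) + ev z r" by (simp add: e ev_add)
    then show ?thesis using root f by (simp add: ev_mult \<Phi>_def)
  qed
  then have "r = 0" using pseudo_divmod(2)[OF \<Phi>0 qr] gmin dg by force
  then show ?thesis using e by (simp add: \<Phi>_def)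
qed



lemma ev_sum: "ev z (sum f A) = (\<Sum>a\<in>A. ev z (f a))"
proof (induction A rule: infinite_finite_induct)
  case (infinite A) then show ?case by (simp add: ev_def)
next
  case empty then show ?case by (simp add: ev_def)
next
  case (insert x F) then show ?case by (simp add: ev_add)
qed
lemma ev_monom: "ev z (monom a j) = of_int a * z ^ j"
  by (simp add: ev_def map_poly_monom poly_monom)

lemma root_ne_1:
  assumes "(p::nat) \<ge> 2"
  shows "exp (2 * pi * \<i> / of_nat p) \<noteq> 1"
proof
  assume h: "exp (2 * pi * \<i> / of_nat p) = 1"
  have "Re (exp (2 * pi * \<i> / of_nat p)) = cos (2 * pi / p)"
    by (simp add: Re_exp)
  then have "cos (2 * pi / p) = 1" using h by simp
  then obtain k :: int where k: "2 * pi / p = of_int k * (2 * pi)"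
    by (auto simp: cos_one_2pi_int)
  then have "2 * pi * (1 / real p) = 2 * pi * of_int k" by (simp add: mult_ac)
  then have "1 / real p = of_int k" using pi_gt_zero by (simp only: mult_cancel_left) simp
  moreover have "0 < 1 / real p" "1 / real p < 1" using assms by auto
  ultimately show False by (metis of_int_0_less_iff of_int_less_1_iff not_le zero_less_one
      int_one_le_iff_zero_less less_irrefl) 
qed

lemma periodic:
  fixes c :: "nat \<Rightarrow> nat"
  assumes p: "prime p" and m: "m > 0" and N: "N = p ^ m" and M: "M = p ^ (m - 1)"
    and \<omega>: "\<omega> = exp (2 * pi * \<i> / of_nat N)"
    and s: "(\<Sum>j<N. of_nat (c j) * \<omega> ^ j) = 0"
    and v: "v < p"
  shows "c (v * M) = c 0"
proof -
  have NM: "N = p * M" using m by (simp add: N M power_eq_if)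
  have M0: "M > 0" and p0: "p > 0" using p by (auto simp: M prime_gt_0_nat)
  have p2: "p \<ge> 2" using p by (simp add: prime_ge_2_nat)
  define f :: "int poly" where "f = (\<Sum>j<N. monom (int (c j)) j)"
  have cf: "coeff f j = (if j < N then int (c j) else 0)" for j
    by (simp add: f_def coeff_sum coeff_monom)
  have "ev \<omega> f = (\<Sum>j<N. of_nat (c j) * \<omega> ^ j)"
    by (simp add: f_def ev_sum ev_monom)
  then have evf: "ev \<omega> f = 0" using s by simp
  define \<zeta> where "\<zeta> = \<omega> ^ M"
  have \<zeta>: "\<zeta> = exp (2 * pi * \<i> / of_nat p)"
  proof -
    have "\<zeta> = exp (of_nat M * (2 * pi * \<i> / of_nat N))"
      by (simp only: \<zeta>_def \<omega> exp_of_nat_mult)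
    also have "of_nat M * (2 * pi * \<i> / of_nat N) = 2 * pi * \<i> / of_nat p"
      using M0 p0 by (simp add: NM field_simps)
    finally show ?thesis .
  qed
  have \<zeta>p: "\<zeta> ^ p = 1"
  proof -
    have "\<zeta> ^ p = exp (of_nat p * (2 * pi * \<i> / of_nat p))" by (simp only: \<zeta> exp_of_nat_mult)
    also have "of_nat p * (2 * pi * \<i> / of_nat p) = 2 * pi * \<i>" using p0 by simp
    finally show ?thesis by simp
  qed
  have \<zeta>1: "\<zeta> \<noteq> 1" using root_ne_1[OF p2] \<zeta> by simp
  have evP: "ev \<omega> (Phi p M) = (\<Sum>v<p. \<zeta> ^ v)"
    unfolding Phi_def ev_sum ev_monom \<zeta>_def
    by (intro sum.cong refl) (simp add: power_mult[symmetric] mult.commute)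
  have "(\<zeta> - 1) * (\<Sum>v<p. \<zeta> ^ v) = 0" using power_diff_1_eq[of \<zeta> p] \<zeta>p by simp
  then have evP0: "ev \<omega> (Phi p M) = 0" using \<zeta>1 evP by simp
  have "Phi p M dvd f" using Phi_dvd[OF p M evP0 evf] .
  then obtain q where q: "f = Phi p M * q" by (elim dvdE)
  have qM: "coeff q i = 0" if "i \<ge> M" for i
  proof (cases "q = 0")
    case False
    have "f \<noteq> 0" using False q M0 p0 by (metis degree_Phi(2) mult_eq_0_iff zero_neq_one leading_coeff_0_iff)
    have "degree f \<le> N - 1" by (rule degree_le) (auto simp: cf)
    moreover have "degree f = degree (Phi p M) + degree q"
      using q False \<open>f \<noteq> 0\<close> by (auto simp: degree_mult_eq)
    ultimately have "(p - 1) * M + degree q \<le> p * M - 1" using degree_Phi(1)[OF M0 p0] NM by simp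
    moreover have "M \<le> p * M" using p0 by simp
    ultimately have "degree q < M" using M0 p0 by (simp add: diff_mult_distrib; linarith)
    then show ?thesis using that by (intro coeff_eq_0) simp
  qed simp
  have key: "coeff f (u * M) = coeff q 0" if "u < p" for u
  proof -
    have "coeff f (u * M) = (\<Sum>w<p. coeff (monom 1 (w * M) * q) (u * M))"
      by (simp add: q Phi_def sum_distrib_right coeff_sum)
    also have "\<dots> = (\<Sum>w<p. if w = u then coeff q 0 else 0)"
    proof (intro sum.cong refl)
      fix w assume "w \<in> {..<p}"
      show "coeff (monom 1 (w * M) * q) (u * M) = (if w = u then coeff q 0 else 0)"
      proof (cases "u < w")
        case True then have "u * M < w * M" using M0 by simp
        then show ?thesis using True by (simp add: coeff_monom_mult)
      next
        case False
        then have "u * M - w * M = (u - w) * M" by (simp add: diff_mult_distrib)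
        moreover have "w \<noteq> u \<Longrightarrow> (u - w) * M \<ge> M" using False M0 by simp
        ultimately show ?thesis using False qM by (auto simp: coeff_monom_mult)
      qed
    qed
    also have "\<dots> = coeff q 0" using that by simp
    finally show ?thesis .
  qed
  have "int (c (v * M)) = int (c 0)"
    using key[OF v] key[of 0] p0 v NM cf[of "v * M"] cf[of 0] M0 by simp
  then show ?thesis by simp
qed



lemma smult_zero_iff:
  "zn2_smult n k x = (0, 0) \<longleftrightarrow> int n dvd k * fst x \<and> int n dvd k * snd x"
  by (simp add: zn2_smult_def dvd_eq_mod_eq_0)

lemma ord_props:
  assumes x: "x \<in> zn2 n"
  shows "zn2_ord n x > 0" and "\<And>k. zn2_smult n k x = (0, 0) \<longleftrightarrow> int (zn2_ord n x) dvd k"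
proof -
  define S where "S k \<longleftrightarrow> 0 < k \<and> zn2_smult n (int k) x = (0, 0)" for k :: nat
  have n0: "n > 0" using x by (auto simp: zn2_def)
  have Sn: "S n" using n0 by (simp add: S_def smult_zero_iff)
  define N where "N = zn2_ord n x"
  have NL: "N = (LEAST k. S k)" by (simp add: N_def zn2_ord_def S_def)
  have SN: "S N" unfolding NL by (rule LeastI[of S, OF Sn])
  have Nmin: "\<And>k. S k \<Longrightarrow> N \<le> k" unfolding NL by (rule Least_le)
  show "zn2_ord n x > 0" using SN by (simp add: S_def N_def)
  fix k :: int
  have d1: "int n dvd int N * fst x" "int n dvd int N * snd x" using SN by (auto simp: S_def smult_zero_iff)
  show "zn2_smult n k x = (0, 0) \<longleftrightarrow> int (zn2_ord n x) dvd k"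
  proof
    assume "int (zn2_ord n x) dvd k"
    then obtain t where t: "k = int N * t" by (auto simp: N_def elim!: dvdE)
    have "int n dvd int N * fst x * t" "int n dvd int N * snd x * t" using d1 by auto
    then show "zn2_smult n k x = (0, 0)" by (simp add: smult_zero_iff t mult_ac)
  next
    assume h: "zn2_smult n k x = (0, 0)"
    define r where "r = k mod int N"
    have N0: "N > 0" using SN by (simp add: S_def)
    have r: "0 \<le> r" "r < int N" using N0 by (auto simp: r_def)
    have kr: "k = int N * (k div int N) + r" by (simp add: r_def)
    have "int n dvd r * fst x"
    proof -
      have r_eq: "r = k - int N * (k div int N)" by (simp add: r_def minus_mult_div_eq_mod)
      have "r * fst x = k * fst x - (int N * fst x) * (k div int N)"
        unfolding r_eq by (simp add: algebra_simps)
      then show ?thesis using h d1 by (simp add: smult_zero_iff)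
    qed
    moreover have "int n dvd r * snd x"
    proof -
      have r_eq: "r = k - int N * (k div int N)" by (simp add: r_def minus_mult_div_eq_mod)
      have "r * snd x = k * snd x - (int N * snd x) * (k div int N)"
        unfolding r_eq by (simp add: algebra_simps)
      then show ?thesis using h d1 by (simp add: smult_zero_iff)
    qed
    ultimately have "r = 0"
    proof -
      assume a: "int n dvd r * fst x" "int n dvd r * snd x"
      show "r = 0"
      proof (rule ccontr)
        assume "r \<noteq> 0"
        then have "S (nat r)" using a r by (simp add: S_def smult_zero_iff)
        then have "N \<le> nat r" by (rule Nmin)
        then show False using r by simp
      qed
    qed
    then show "int (zn2_ord n x) dvd k" by (simp add: r_def N_def dvd_eq_mod_eq_0)
  qed
qed

lemma symp_smult:
  "symp n g (zn2_smult n k y) = (k * (fst g * snd y - snd g * fst y)) mod int n"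
proof -
  have "symp n g (zn2_smult n k y) =
     (fst g * ((k * snd y) mod int n) - snd g * ((k * fst y) mod int n)) mod int n"
    by (simp add: symp_def zn2_smult_def)
  also have "\<dots> = (fst g * (k * snd y) - snd g * (k * fst y)) mod int n"
    by (rule mod_diff_cong) (simp_all add: mod_mult_right_eq)
  also have "fst g * (k * snd y) - snd g * (k * fst y) = k * (fst g * snd y - snd g * fst y)"
    by (simp add: algebra_simps)
  finally show ?thesis .
qed

lemma sperp_cyc:
  "g \<in> sperp n (cyc n y) \<longleftrightarrow> g \<in> zn2 n \<and> int n dvd (fst g * snd y - snd g * fst y)"
proof -
  have "(\<forall>h\<in>cyc n y. symp n g h = 0) \<longleftrightarrow> int n dvd (fst g * snd y - snd g * fst y)"
  proof
    assume a: "\<forall>h\<in>cyc n y. symp n g h = 0"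
    have "zn2_smult n 1 y \<in> cyc n y" unfolding cyc_def by blast
    then have "symp n g (zn2_smult n 1 y) = 0" using a by blast
    then show "int n dvd (fst g * snd y - snd g * fst y)" by (simp add: symp_smult dvd_eq_mod_eq_0)
  next
    assume "int n dvd (fst g * snd y - snd g * fst y)"
    then show "\<forall>h\<in>cyc n y. symp n g h = 0"
      by (auto simp: cyc_def symp_smult dvd_eq_mod_eq_0[symmetric])
  qed
  then show ?thesis by (simp add: sperp_def)
qed



theorem mainTheorem1:
  fixes n p m :: nat and x :: "int \<times> int" and A :: "(int \<times> int) set"
  assumes "prime p" and "0 < m"
    and "x \<in> zn2 n" and "zn2_ord n x = p ^ m"
    and "A \<subseteq> zn2 n"
    and "sym_fourier n A x = 0"
  shows "card (A \<inter> sperp n (cyc n (zn2_smult n (int p) x)))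
           = p * card (A \<inter> sperp n (cyc n x))"
proof -
  note p = assms(1) and m = assms(2) and x = assms(3) and ordx = assms(4) and As = assms(5)
    and F = assms(6)
  define N where "N = p ^ m"
  define M where "M = p ^ (m - 1)"
  have NM: "N = p * M" using m by (simp add: N_def M_def power_eq_if)
  have p0: "p > 0" and M0: "M > 0" using p by (auto simp: M_def prime_gt_0_nat)
  have N0: "N > 0" using NM p0 M0 by simp
  have n0: "n > 0" using x by (auto simp: zn2_def)
  have ordiff: "\<And>k. zn2_smult n k x = (0, 0) \<longleftrightarrow> int N dvd k"
    using ord_props(2)[OF x] ordx N_def by simp
  have "zn2_smult n (int n) x = (0, 0)" by (simp add: smult_zero_iff)
  then have "int N dvd int n" using ordiff by simp
  then obtain e where ne: "n = N * e" by (auto simp: int_dvd_int_iff elim!: dvdE)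
  have e0: "e > 0" using n0 ne by (cases e) auto
  have "zn2_smult n (int N) x = (0, 0)" using ordiff by simp
  then have d1: "int n dvd int N * fst x" "int n dvd int N * snd x" by (auto simp: smult_zero_iff)
  define D where "D a = fst a * snd x - snd a * fst x" for a :: "int \<times> int"
  have nD: "int n dvd int N * D a" for a
  proof -
    have "int N * D a = fst a * (int N * snd x) - snd a * (int N * fst x)"
      by (simp add: D_def algebra_simps)
    then show ?thesis using d1 by simp
  qed
  define t where "t a = D a div int e" for a
  have Dt: "D a = int e * t a" for a
  proof -
    from nD[of a] obtain u where u: "int N * D a = int n * u" by (elim dvdE)
    then have "int N * D a = int N * (int e * u)" by (simp add: ne)
    then have "D a = int e * u" using N0 by simp
    then show ?thesis by (simp add: t_def e0)
  qed
  define J where "J a = nat (t a mod int N)" for a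
  have J: "int (J a) = t a mod int N" for a using N0 by (simp add: J_def)
  have JN: "J a < N" for a using N0 J[of a] by (metis of_nat_less_iff pos_mod_bound of_nat_0_less_iff)
  define \<omega> where "\<omega> = exp (2 * pi * \<i> / of_nat N)"
  have expJ: "exp (2 * pi * \<i> * of_int (symp n a x) / of_nat n) = \<omega> ^ J a" for a
  proof -
    have "symp n a x = D a mod int n" by (simp add: symp_def D_def)
    also have "\<dots> = int e * (t a mod int N)" by (simp add: Dt ne mult.commute)
    also have "\<dots> = int e * int (J a)" by (simp add: J)
    finally have s: "symp n a x = int e * int (J a)" .
    have "2 * pi * \<i> * of_int (symp n a x) / of_nat n = of_nat (J a) * (2 * pi * \<i> / of_nat N)"
      using e0 N0 unfolding s by (simp add: ne field_simps)
    then show ?thesis by (simp only: \<omega>_def exp_of_nat_mult)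
  qed
  have finA: "finite A" using As finite_subset by (auto simp: zn2_def)
  define c where "c j = card {a \<in> A. J a = j}" for j
  have "sym_fourier n A x = (\<Sum>a\<in>A. \<omega> ^ J a)"
    unfolding sym_fourier_def by (intro sum.cong refl expJ)
  also have "\<dots> = (\<Sum>j<N. \<Sum>a\<in>{a \<in> A. J a = j}. \<omega> ^ J a)"
    by (rule sum.group[symmetric]) (use finA JN in auto)
  also have "\<dots> = (\<Sum>j<N. of_nat (c j) * \<omega> ^ j)" by (simp add: c_def)
  finally have s0: "(\<Sum>j<N. of_nat (c j) * \<omega> ^ j) = 0" using F by simp
  have per: "c (v * M) = c 0" if "v < p" for v
    by (rule periodic[OF p m N_def M_def \<omega>_def s0 that])
  have setx: "A \<inter> sperp n (cyc n x) = {a \<in> A. J a = 0}"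
  proof -
    have "int n dvd D a \<longleftrightarrow> J a = 0" for a
    proof -
      have "int n dvd D a \<longleftrightarrow> int N dvd t a" using e0 by (simp add: Dt ne mult.commute)
      also have "\<dots> \<longleftrightarrow> J a = 0" using J[of a] by (auto simp: dvd_eq_mod_eq_0)
      finally show ?thesis .
    qed
    then show ?thesis using As by (auto simp: sperp_cyc D_def)
  qed
  define T where "T = (\<lambda>v. v * M) ` {..<p}"
  have setpx: "A \<inter> sperp n (cyc n (zn2_smult n (int p) x)) = {a \<in> A. J a \<in> T}"
  proof -
    have "int n dvd (fst a * snd (zn2_smult n (int p) x) - snd a * fst (zn2_smult n (int p) x))
          \<longleftrightarrow> J a \<in> T" for a
    proof -
      have "(fst a * snd (zn2_smult n (int p) x) - snd a * fst (zn2_smult n (int p) x)) mod int n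
            = (int p * D a) mod int n"
      proof -
        have "int p * D a = fst a * (int p * snd x) - snd a * (int p * fst x)"
          by (simp add: D_def algebra_simps)
        then show ?thesis unfolding zn2_smult_def
          by simp (rule mod_diff_cong; simp add: mod_mult_right_eq)
      qed
      then have "int n dvd (fst a * snd (zn2_smult n (int p) x) - snd a * fst (zn2_smult n (int p) x))
          \<longleftrightarrow> int n dvd int p * D a" by (simp add: dvd_eq_mod_eq_0)
      also have "\<dots> \<longleftrightarrow> int N dvd int p * t a" using e0
        by (simp add: Dt ne mult.commute mult.left_commute)
      also have "\<dots> \<longleftrightarrow> int M dvd t a" using p0 by (simp add: NM)
      also have "\<dots> \<longleftrightarrow> int M dvd t a mod int N"
      proof -
        have "int M dvd int N" by (simp add: NM)
        then show ?thesis by (simp add: dvd_mod_iff)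
      qed
      also have "\<dots> \<longleftrightarrow> M dvd J a" by (simp flip: J)
      also have "\<dots> \<longleftrightarrow> J a \<in> T"
      proof
        assume "M dvd J a"
        then obtain v where v: "J a = M * v" by (elim dvdE)
        then have "v < p" using JN[of a] NM M0 by simp
        then show "J a \<in> T" using v by (auto simp: T_def mult.commute)
      qed (auto simp: T_def)
      finally show ?thesis .
    qed
    then show ?thesis using As by (auto simp: sperp_cyc)
  qed
  have "card {a \<in> A. J a \<in> T} = (\<Sum>j\<in>T. c j)"
  proof -
    have "card {a \<in> A. J a \<in> T} = (\<Sum>j\<in>T. \<Sum>a\<in>{a' \<in> {a \<in> A. J a \<in> T}. J a' = j}. 1)"
      by (subst sum.group) (use finA in \<open>auto simp: T_def\<close>)
    also have "\<dots> = (\<Sum>j\<in>T. c j)"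
      by (intro sum.cong refl) (auto simp: c_def intro!: arg_cong[where f = card])
    finally show ?thesis .
  qed
  also have "\<dots> = (\<Sum>v<p. c (v * M))"
    unfolding T_def using M0 by (subst sum.reindex) (auto simp: inj_on_def)
  also have "\<dots> = p * c 0" using per by simp
  finally show ?thesis using setx setpx by (simp add: c_def)
qed


end
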